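(* Let $\bm{B}\in\mathbb{C}^{m\times d_1}$, $\bm{A}\in\mathbb{C}^{m\times d_2}$, $\bm{y}\in\mathbb{C}^m$. The functions $F_1,F_2:\mathbb{R}^{d_1}\times\mathbb{R}^{d_2}\to\mathbb{R}$ defined by $$F_1(\bm{h},\bm{x})=\frac14\|\bm{Bh}\|_4^4+\frac14\|\bm{Ax}\|_4^4+\frac12\Big(\|\bm{Bh}\odot\bm{Ax}\|_2^2+\|\bm{y}\odot\bm{Bh}\|_2^2+\|\bm{Ax}\|_2^2+\|\bm{y}\|_2^2\Big),$$ $$F_2(\bm{h},\bm{x})=\frac14\|\bm{Bh}\|_4^4+\frac14\|\bm{Ax}\|_4^4+\frac12\|\bar{\bm{y}}\odot\bm{Bh}+\overline{\bm{Ax}}\|_2^2$$ are both convex on $\mathbb{R}^{d_1+d_2}$.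
   Context: $\odot$ is the Hadamard (elementwise) product, $\bar{\cdot}$ denotes entrywise complex conjugation, and for $\bm{w}\in\mathbb{C}^m$, $\|\bm{w}\|_2^2=\sum_j|w_j|^2$, $\|\bm{w}\|_4^4=\sum_j|w_j|^4$. The variables $\bm{h}\in\mathbb{R}^{d_1}$, $\bm{x}\in\mathbb{R}^{d_2}$ are real. *)

theory Defs
  imports "HOL-Analysis.Analysis"
begin

text \<open>Vectors in C^m are complex^'m; matrices in C^(m x d) are complex^'d^'m.\<close>

definition hadamard :: "complex^'m \<Rightarrow> complex^'m \<Rightarrow> complex^'m" where
  "hadamard u w = (\<chi> j. u $ j * w $ j)"

definition vconj :: "complex^'m \<Rightarrow> complex^'m" where
  "vconj w = (\<chi> j. cnj (w $ j))"

definition norm2sq :: "complex^'m \<Rightarrow> real" where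
  "norm2sq w = (\<Sum>j\<in>UNIV. (cmod (w $ j))^2)"

definition norm4pow4 :: "complex^'m \<Rightarrow> real" where
  "norm4pow4 w = (\<Sum>j\<in>UNIV. (cmod (w $ j))^4)"

definition cvec :: "real^'d \<Rightarrow> complex^'d" where
  "cvec h = (\<chi> i. complex_of_real (h $ i))"

definition F1 :: "complex^'d1^'m \<Rightarrow> complex^'d2^'m \<Rightarrow> complex^'m \<Rightarrow> real^'d1 \<Rightarrow> real^'d2 \<Rightarrow> real" where
  "F1 B A y h x =
     (let Bh = B *v cvec h; Ax = A *v cvec x in
      norm4pow4 Bh / 4 + norm4pow4 Ax / 4 +
      (norm2sq (hadamard Bh Ax) + norm2sq (hadamard y Bh) + norm2sq Ax + norm2sq y) / 2)"

definition F2 :: "complex^'d1^'m \<Rightarrow> complex^'d2^'m \<Rightarrow> complex^'m \<Rightarrow> real^'d1 \<Rightarrow> real^'d2 \<Rightarrow> real" where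
  "F2 B A y h x =
     (let Bh = B *v cvec h; Ax = A *v cvec x in
      norm4pow4 Bh / 4 + norm4pow4 Ax / 4 +
      norm2sq (hadamard (vconj y) Bh + vconj Ax) / 2)"

end

theory Submission
  imports Defs
begin

lemma conv_norm_lin:
  assumes "linear (L :: 'a::real_vector \<Rightarrow> 'b::real_normed_vector)"
  shows "convex_on UNIV (\<lambda>p. norm (L p))"
proof (rule convex_onI)
  fix t :: real and x y :: 'a
  assume t: "0 < t" "t < 1"
  have "norm (L ((1 - t) *\<^sub>R x + t *\<^sub>R y)) = norm ((1 - t) *\<^sub>R L x + t *\<^sub>R L y)"
    using assms by (simp add: linear_add linear_scale)
  also have "\<dots> \<le> norm ((1 - t) *\<^sub>R L x) + norm (t *\<^sub>R L y)" by (rule norm_triangle_ineq)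
  also have "\<dots> = (1 - t) * norm (L x) + t * norm (L y)" using t by simp
  finally show "norm (L ((1 - t) *\<^sub>R x + t *\<^sub>R y)) \<le> (1 - t) * norm (L x) + t * norm (L y)" .
qed simp

lemma conv_sq:
  assumes "convex_on UNIV (g :: 'a::real_vector \<Rightarrow> real)" and "\<And>p. g p \<ge> 0"
  shows "convex_on UNIV (\<lambda>p. (g p)^2)"
proof (rule convex_onI)
  fix t :: real and x y :: 'a
  assume t: "0 < t" "t < 1"
  have a: "g ((1 - t) *\<^sub>R x + t *\<^sub>R y) \<le> (1 - t) * g x + t * g y"
    using convex_onD[OF assms(1), of t x y] t by simp
  have "(g ((1 - t) *\<^sub>R x + t *\<^sub>R y))^2 \<le> ((1 - t) * g x + t * g y)^2"
    using a assms(2) by (intro power_mono) auto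
  also have "\<dots> \<le> (1 - t) * (g x)^2 + t * (g y)^2"
  proof -
    have "(1 - t) * (g x)^2 + t * (g y)^2 - ((1 - t) * g x + t * g y)^2 = t * (1 - t) * (g x - g y)^2"
      by (simp add: power2_eq_square algebra_simps)
    moreover have "t * (1 - t) * (g x - g y)^2 \<ge> 0" using t by simp
    ultimately show ?thesis by linarith
  qed
  finally show "(g ((1 - t) *\<^sub>R x + t *\<^sub>R y))^2 \<le> (1 - t) * (g x)^2 + t * (g y)^2" .
qed simp

lemma conv_sum:
  assumes "finite I" "\<And>i. i \<in> I \<Longrightarrow> convex_on UNIV (f i :: 'a::real_vector \<Rightarrow> real)"
  shows "convex_on UNIV (\<lambda>p. \<Sum>i\<in>I. f i p)"
  using assms
proof (induction I rule: finite_induct)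
  case empty then show ?case by (simp add: convex_on_const)
next
  case (insert i I) then show ?case by (simp add: convex_on_add)
qed

lemma lin_U: "linear (\<lambda>p::((real^'d1) \<times> (real^'d2)). ((B::complex^'d1^'m) *v cvec (fst p)) $ j)"
  apply (rule linearI)
   apply (simp_all add: matrix_vector_mult_def cvec_def vector_scaleR_component sum.distrib algebra_simps)
  apply (simp add: scaleR_conv_of_real sum_distrib_left algebra_simps)
  done

lemma lin_V: "linear (\<lambda>p::((real^'d1) \<times> (real^'d2)). ((A::complex^'d2^'m) *v cvec (snd p)) $ j)"
  apply (rule linearI)
   apply (simp_all add: matrix_vector_mult_def cvec_def vector_scaleR_component sum.distrib algebra_simps)
  apply (simp add: scaleR_conv_of_real sum_distrib_left algebra_simps)
  done

lemma F1_eq: "F1 B A y h x = (\<Sum>j\<in>UNIV.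
        (1/4) * ((cmod ((B *v cvec h)$j))^2 + (cmod ((A *v cvec x)$j))^2)^2 + ((1/2) * (cmod (y$j))^2) * (cmod ((B *v cvec h)$j))^2
        + (1/2) * (cmod ((A *v cvec x)$j))^2) + norm2sq y / 2"
  unfolding F1_def Let_def norm4pow4_def norm2sq_def hadamard_def vec_lambda_beta
  unfolding sum_divide_distrib sum_distrib_left sum.distrib[symmetric]
  by (intro sum.cong refl) (simp add: norm_mult power_mult_distrib power2_eq_square power4_eq_xxxx algebra_simps)
lemma F2_eq: "F2 B A y h x = (\<Sum>j\<in>UNIV.
        (1/4) * ((cmod ((B *v cvec h)$j))^2)^2 + (1/4) * ((cmod ((A *v cvec x)$j))^2)^2 + (1/2) * (cmod (cnj (y$j) * (B *v cvec h)$j + cnj ((A *v cvec x)$j)))^2)"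
  unfolding F2_def Let_def norm4pow4_def norm2sq_def hadamard_def vconj_def vec_lambda_beta plus_vec_def
  unfolding sum_divide_distrib sum_distrib_left sum.distrib[symmetric]
  by (intro sum.cong refl) (simp add: power_mult_distrib)
theorem mainTheorem3:
  fixes B :: "complex^'d1^'m" and A :: "complex^'d2^'m" and y :: "complex^'m"
  shows "convex_on UNIV (\<lambda>(h, x). F1 B A y h x) \<and> convex_on UNIV (\<lambda>(h, x). F2 B A y h x)"
proof
  define U where "U j (p::(real^'d1) \<times> (real^'d2)) = (B *v cvec (fst p)) $ j" for j p
  define V where "V j (p::(real^'d1) \<times> (real^'d2)) = (A *v cvec (snd p)) $ j" for j p
  have lU: "linear (U j)" for j unfolding U_def[abs_def] by (rule lin_U)
  have lV: "linear (V j)" for j unfolding V_def[abs_def] by (rule lin_V)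
  have cU: "convex_on UNIV (\<lambda>p. (cmod (U j p))^2)" for j
    by (rule conv_sq[OF conv_norm_lin[OF lU]]) simp
  have cV: "convex_on UNIV (\<lambda>p. (cmod (V j p))^2)" for j
    by (rule conv_sq[OF conv_norm_lin[OF lV]]) simp
  show "convex_on UNIV (\<lambda>(h, x). F1 B A y h x)"
  proof -
    have eq: "(\<lambda>(h, x). F1 B A y h x) = (\<lambda>p. (\<Sum>j\<in>UNIV.
        (1/4) * ((cmod (U j p))^2 + (cmod (V j p))^2)^2 + ((1/2) * (cmod (y$j))^2) * (cmod (U j p))^2
        + (1/2) * (cmod (V j p))^2) + norm2sq y / 2)"
      by (simp only: fun_eq_iff case_prod_beta U_def V_def F1_eq) simp
    have "convex_on UNIV (\<lambda>p. (\<Sum>j\<in>UNIV.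
        (1/4) * ((cmod (U j p))^2 + (cmod (V j p))^2)^2 + ((1/2) * (cmod (y$j))^2) * (cmod (U j p))^2
        + (1/2) * (cmod (V j p))^2) + norm2sq y / 2)"
      apply (intro convex_on_add conv_sum finite_UNIV convex_on_cmul conv_sq cU cV conv_norm_lin lU lV)
        apply (auto simp: convex_on_const)
      done
    then show ?thesis by (simp only: eq)
  qed
  show "convex_on UNIV (\<lambda>(h, x). F2 B A y h x)"
  proof -
    define W where "W j p = cnj (y$j) * U j p + cnj (V j p)" for j p
    have lW: "linear (W j)" for j
    proof -
      have "linear (\<lambda>p. cnj (y$j) * U j p)"
        using linear_compose[OF lU, of "\<lambda>z. cnj (y$j) * z"]
        by (simp add: o_def bounded_linear.linear[OF bounded_linear_mult_right])
      moreover have "linear (\<lambda>p. cnj (V j p))"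
        using linear_compose[OF lV linear_cnj] by (simp add: o_def)
      ultimately show ?thesis unfolding W_def[abs_def] by (rule linear_compose_add)
    qed
    have eq: "(\<lambda>(h, x). F2 B A y h x) = (\<lambda>p. (\<Sum>j\<in>UNIV.
        (1/4) * ((cmod (U j p))^2)^2 + (1/4) * ((cmod (V j p))^2)^2 + (1/2) * (cmod (W j p))^2))"
      by (simp only: fun_eq_iff case_prod_beta U_def V_def W_def F2_eq) simp
    have "convex_on UNIV (\<lambda>p. (\<Sum>j\<in>UNIV.
        (1/4) * ((cmod (U j p))^2)^2 + (1/4) * ((cmod (V j p))^2)^2 + (1/2) * (cmod (W j p))^2))"
      apply (intro convex_on_add conv_sum finite_UNIV convex_on_cmul conv_sq cU cV conv_norm_lin lW lU lV)
        apply auto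
      done
    then show ?thesis by (simp only: eq)
  qed
qed

end
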